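(* Let $C$ be a coalgebra over a field $\Bbbk$ and $C^*$ its dual (convolution) algebra. Every left annihilator in $C^*$, i.e. every set of the form $I=\{f\in C^*\mid f\cdot h=0\ \forall h\in H\}$ for some subset $H\subseteq C^*$, is closed in the finite topology of $C^*$.
   Context: For a coalgebra $C$, $C^*$ is an algebra with convolution product $(f\cdot h)(c)=\sum f(c_1)h(c_2)$ (Sweedler notation). For a subspace $X\subseteq C$ let $X^\perp=\{f\in C^*\mid f(X)=0\}$, and for $Y\subseteq C^*$ let $Y^\perp=\{c\in C\mid f(c)=0\ \forall f\in Y\}$. The finite topology on $C^*$ is the topology whose closed subspaces are those $W\subseteq C^*$ with $W=W^{\perp\perp}$, equivalently those of the form $X^\perp$ for a subspace $X\subseteq C$. *)

theory Defs
  imports Complex_Main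
begin

definition dual_space :: "('k::field \<Rightarrow> 'c::ab_group_add \<Rightarrow> 'c) \<Rightarrow> ('c \<Rightarrow> 'k) set" where
  "dual_space sc = {f. Vector_Spaces.linear sc ((*) :: 'k \<Rightarrow> 'k \<Rightarrow> 'k) f}"

definition bilin :: "('k::field \<Rightarrow> 'c::ab_group_add \<Rightarrow> 'c) \<Rightarrow> ('c \<Rightarrow> 'c \<Rightarrow> 'k) \<Rightarrow> bool" where
  "bilin sc b \<longleftrightarrow> (\<forall>x. Vector_Spaces.linear sc (*) (b x)) \<and> (\<forall>y. Vector_Spaces.linear sc (*) (\<lambda>x. b x y))"

definition trilin :: "('k::field \<Rightarrow> 'c::ab_group_add \<Rightarrow> 'c) \<Rightarrow> ('c \<Rightarrow> 'c \<Rightarrow> 'c \<Rightarrow> 'k) \<Rightarrow> bool" where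
  "trilin sc t \<longleftrightarrow> (\<forall>x y. Vector_Spaces.linear sc (*) (t x y)) \<and>
     (\<forall>x z. Vector_Spaces.linear sc (*) (\<lambda>y. t x y z)) \<and>
     (\<forall>y z. Vector_Spaces.linear sc (*) (\<lambda>x. t x y z))"

text \<open>Comultiplication in Sweedler form: delta c is a finite list of pairs (c1,c2)
representing the tensor \<Sum> c1 \<otimes> c2 in C \<otimes> C.  Since elements of finite tensor
products over a field are separated by multilinear forms, linearity and coassociativity of
the comultiplication are expressed by evaluating against all bi-/trilinear forms.\<close>

definition sw2 :: "('c \<Rightarrow> ('c \<times> 'c) list) \<Rightarrow> ('c \<Rightarrow> 'c \<Rightarrow> 'k::field) \<Rightarrow> 'c \<Rightarrow> 'k" where
  "sw2 delta b c = sum_list (map (\<lambda>(x, y). b x y) (delta c))"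

definition coalgebra ::
  "('k::field \<Rightarrow> 'c::ab_group_add \<Rightarrow> 'c) \<Rightarrow> ('c \<Rightarrow> ('c \<times> 'c) list) \<Rightarrow> ('c \<Rightarrow> 'k) \<Rightarrow> bool" where
  "coalgebra sc delta eps \<longleftrightarrow>
     vector_space sc \<and>
     Vector_Spaces.linear sc (*) eps \<and>
     (\<forall>b. bilin sc b \<longrightarrow> Vector_Spaces.linear sc (*) (sw2 delta b)) \<and>
     (\<forall>t. trilin sc t \<longrightarrow>
        (\<forall>c. sw2 delta (\<lambda>x y. sw2 delta (\<lambda>u v. t u v y) x) c
           = sw2 delta (\<lambda>x y. sw2 delta (\<lambda>u v. t x u v) y) c)) \<and>
     (\<forall>c. sum_list (map (\<lambda>(x, y). sc (eps x) y) (delta c)) = c) \<and>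
     (\<forall>c. sum_list (map (\<lambda>(x, y). sc (eps y) x) (delta c)) = c)"

definition conv :: "('c \<Rightarrow> ('c \<times> 'c) list) \<Rightarrow> ('c \<Rightarrow> 'k::field) \<Rightarrow> ('c \<Rightarrow> 'k) \<Rightarrow> 'c \<Rightarrow> 'k" where
  "conv delta f h = sw2 delta (\<lambda>x y. f x * h y)"

definition perp_C :: "('c \<Rightarrow> 'k::field) set \<Rightarrow> 'c set" where
  "perp_C Y = {c. \<forall>f\<in>Y. f c = 0}"

definition perp_dual :: "('k::field \<Rightarrow> 'c::ab_group_add \<Rightarrow> 'c) \<Rightarrow> 'c set \<Rightarrow> ('c \<Rightarrow> 'k) set" where
  "perp_dual sc X = {f \<in> dual_space sc. \<forall>x\<in>X. f x = 0}"

definition finite_top_closed :: "('k::field \<Rightarrow> 'c::ab_group_add \<Rightarrow> 'c) \<Rightarrow> ('c \<Rightarrow> 'k) set \<Rightarrow> bool" where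
  "finite_top_closed sc W \<longleftrightarrow> W = perp_dual sc (perp_C W)"

end

theory Submission
  imports Defs
begin

lemma lin_sumlist:
  assumes "Vector_Spaces.linear sc ((*) :: 'k::field \<Rightarrow> 'k \<Rightarrow> 'k) f"
  shows "f (sum_list (map (\<lambda>(x, y). sc (h y) x) xs)) = sum_list (map (\<lambda>(x, y). f x * h y) xs)"
proof (induction xs)
  case Nil
  have "f (0 + 0) = f 0 + f 0"
    using assms unfolding Vector_Spaces.linear_def module_hom_def module_hom_axioms_def by blast
  then show ?case by (metis add.right_neutral add_left_imp_eq list.simps(8) sum_list_simps(1))
next
  case (Cons a xs)
  obtain x y where a: "a = (x, y)" by force
  have "f (sc (h y) x + sum_list (map (\<lambda>(x, y). sc (h y) x) xs))
      = f (sc (h y) x) + f (sum_list (map (\<lambda>(x, y). sc (h y) x) xs))"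
    using assms unfolding Vector_Spaces.linear_def module_hom_def module_hom_axioms_def by blast
  moreover have "f (sc (h y) x) = h y * f x"
    using assms unfolding Vector_Spaces.linear_def module_hom_def module_hom_axioms_def by blast
  ultimately show ?case using Cons a by (simp add: mult.commute)
qed

theorem proposition3p1:
  fixes sc :: "'k::field \<Rightarrow> 'c::ab_group_add \<Rightarrow> 'c"
    and delta :: "'c \<Rightarrow> ('c \<times> 'c) list"
    and eps :: "'c \<Rightarrow> 'k"
    and H :: "('c \<Rightarrow> 'k) set"
  assumes "coalgebra sc delta eps"
    and "H \<subseteq> dual_space sc"
  shows "finite_top_closed sc {f \<in> dual_space sc. \<forall>h\<in>H. conv delta f h = (\<lambda>c. 0)}"
proof -
  let ?I = "{f \<in> dual_space sc. \<forall>h\<in>H. conv delta f h = (\<lambda>c. 0)}"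
  define w where "w c h = sum_list (map (\<lambda>(x, y). sc (h y) x) (delta c))" for c and h :: "'c \<Rightarrow> 'k"
  have key: "f (w c h) = conv delta f h c" if "f \<in> dual_space sc" for f c h
    using lin_sumlist[of sc f h "delta c"] that
    by (simp add: w_def dual_space_def conv_def sw2_def case_prod_beta)
  have "perp_dual sc (perp_C ?I) \<subseteq> ?I"
  proof
    fix f assume f: "f \<in> perp_dual sc (perp_C ?I)"
    hence fd: "f \<in> dual_space sc" by (simp add: perp_dual_def)
    have "conv delta f h = (\<lambda>c. 0)" if "h \<in> H" for h
    proof
      fix c
      have "w c h \<in> perp_C ?I"
        unfolding perp_C_def
      proof (intro CollectI ballI)
        fix g assume "g \<in> ?I"
        thus "g (w c h) = 0" using key[of g c h] that by auto
      qed
      hence "f (w c h) = 0" using f by (simp add: perp_dual_def)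
      thus "conv delta f h c = 0" using key[OF fd] by simp
    qed
    thus "f \<in> ?I" using fd by simp
  qed
  moreover have "?I \<subseteq> perp_dual sc (perp_C ?I)"
    by (auto simp: perp_dual_def perp_C_def)
  ultimately show ?thesis unfolding finite_top_closed_def by blast
qed

end
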